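(* For $\varepsilon>0$ let $\alpha(\varepsilon)=\inf_{0<x<\min\{\varepsilon,1\}}(x-x^3)^{-2/3}$, which equals $(\varepsilon-\varepsilon^3)^{-2/3}$ if $\varepsilon\le3^{-1/2}$ and $3\cdot2^{-2/3}=1.8898\ldots$ otherwise. Then for every $\varepsilon>0$, $$\max_{1\le k\le n}\sigma_k^2\le\alpha(\varepsilon)\sup_{0<x\le\varepsilon}\big(xL_n(x)\big)^{2/3}.$$
   Context: $X_1,\dots,X_n$ are independent real random variables with $\mathbb E X_k=0$, $\sigma_k^2=\mathbb E X_k^2<\infty$, normalized so that $\sum_{k=1}^n\sigma_k^2=1$; $L_n(z)=\sum_{k=1}^n\mathbb E X_k^2\mathbf 1(|X_k|\ge z)$ for $z\ge0$. *)

theory Defs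
  imports "HOL-Probability.Probability"
begin

definition lind_L :: "'a measure \<Rightarrow> (nat \<Rightarrow> 'a \<Rightarrow> real) \<Rightarrow> nat \<Rightarrow> real \<Rightarrow> real" where
  "lind_L M X n z = (\<Sum>k=1..n. integral\<^sup>L M (\<lambda>\<omega>. (X k \<omega>)\<^sup>2 * indicator {\<omega>. \<bar>X k \<omega>\<bar> \<ge> z} \<omega>))"

definition alpha_eps :: "real \<Rightarrow> real" where
  "alpha_eps \<epsilon> = (INF x\<in>{0<..<min \<epsilon> 1}. (x - x ^ 3) powr (-(2/3)))"

end

theory Submission
  imports Defs
begin

theorem lemma4:
  fixes M :: "'a measure" and X :: "nat \<Rightarrow> 'a \<Rightarrow> real" and n :: nat and \<epsilon> :: real
  assumes "prob_space M"
    and "\<And>k. k \<in> {1..n} \<Longrightarrow> X k \<in> borel_measurable M"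
    and "prob_space.indep_vars M (\<lambda>_. borel) X {1..n}"
    and "\<And>k. k \<in> {1..n} \<Longrightarrow> integrable M (X k)"
    and "\<And>k. k \<in> {1..n} \<Longrightarrow> integral\<^sup>L M (X k) = 0"
    and "\<And>k. k \<in> {1..n} \<Longrightarrow> integrable M (\<lambda>\<omega>. (X k \<omega>)\<^sup>2)"
    and "(\<Sum>k=1..n. integral\<^sup>L M (\<lambda>\<omega>. (X k \<omega>)\<^sup>2)) = 1"
    and "\<epsilon> > 0"
  shows "Max ((\<lambda>k. integral\<^sup>L M (\<lambda>\<omega>. (X k \<omega>)\<^sup>2)) ` {1..n})
           \<le> alpha_eps \<epsilon> * (SUP x\<in>{0<..\<epsilon>}. (x * lind_L M X n x) powr (2/3))"
proof -
  interpret P: prob_space M by (rule assms(1))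
  define I where "I k = integral\<^sup>L M (\<lambda>\<omega>. (X k \<omega>)\<^sup>2)" for k
  define T where "T k y = integral\<^sup>L M (\<lambda>\<omega>. (X k \<omega>)\<^sup>2 * indicator {\<omega>. \<bar>X k \<omega>\<bar> \<ge> y} \<omega>)" for k y
  define c where "c = (SUP x\<in>{0<..\<epsilon>}. (x * lind_L M X n x) powr (2/3))"
  define f where "f x = (x - x ^ 3) powr (-(2/3))" for x :: real
  have Ldef: "lind_L M X n y = (\<Sum>k=1..n. T k y)" for y
    unfolding lind_L_def T_def by simp
  have meas: "(\<lambda>\<omega>. (X k \<omega>)\<^sup>2 * indicator {\<omega>. \<bar>X k \<omega>\<bar> \<ge> y} \<omega>) \<in> borel_measurable M"
    if "k \<in> {1..n}" for k y
  proof -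
    have "(\<lambda>\<omega>. (X k \<omega>)\<^sup>2 * indicator {\<omega>. \<bar>X k \<omega>\<bar> \<ge> y} \<omega>) =
          (\<lambda>\<omega>. if y \<le> \<bar>X k \<omega>\<bar> then (X k \<omega>)\<^sup>2 else 0)"
      by (auto simp: indicator_def)
    then show ?thesis using assms(2)[OF that] by simp
  qed
  have intT: "integrable M (\<lambda>\<omega>. (X k \<omega>)\<^sup>2 * indicator {\<omega>. \<bar>X k \<omega>\<bar> \<ge> y} \<omega>)"
    if "k \<in> {1..n}" for k y
    by (rule Bochner_Integration.integrable_bound[OF assms(6)[OF that] meas[OF that]])
       (auto simp: indicator_def)
  have Tnn: "T k y \<ge> 0" for k y
    unfolding T_def by (intro Bochner_Integration.integral_nonneg) (auto simp: indicator_def)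
  have Inn: "I k \<ge> 0" for k
    unfolding I_def by (intro Bochner_Integration.integral_nonneg) auto
  have TI: "T k y \<le> I k" if "k \<in> {1..n}" for k y
    unfolding T_def I_def
    by (rule integral_mono[OF intT[OF that] assms(6)[OF that]]) (auto simp: indicator_def)
  have Lle: "lind_L M X n y \<le> 1" for y
  proof -
    have "lind_L M X n y \<le> (\<Sum>k=1..n. I k)" unfolding Ldef by (rule sum_mono) (use TI in auto)
    also have "\<dots> = 1" using assms(7) unfolding I_def by simp
    finally show ?thesis .
  qed
  have Lnn: "lind_L M X n y \<ge> 0" for y
    unfolding Ldef by (rule sum_nonneg) (use Tnn in auto)
  have bdd: "bdd_above ((\<lambda>x. (x * lind_L M X n x) powr (2/3)) ` {0<..\<epsilon>})"
  proof (rule bdd_aboveI2)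
    fix x assume x: "x \<in> {0<..\<epsilon>}"
    have "x * lind_L M X n x \<le> \<epsilon> * 1"
      using x Lle[of x] Lnn[of x] by (intro mult_mono) auto
    moreover have "0 \<le> x * lind_L M X n x" using x Lnn[of x] by simp
    ultimately show "(x * lind_L M X n x) powr (2/3) \<le> \<epsilon> powr (2/3)"
      by (intro powr_mono2) auto
  qed
  have cupper: "(y * lind_L M X n y) powr (2/3) \<le> c" if "y \<in> {0<..\<epsilon>}" for y
    unfolding c_def by (rule cSUP_upper[OF that bdd])
  have c0: "c \<ge> 0"
    using cupper[of \<epsilon>] assms(8) powr_ge_zero[of "\<epsilon> * lind_L M X n \<epsilon>" "2/3"]
    by (meson greaterThanAtMost_iff order_refl order_trans)
  have n1: "{1..n} \<noteq> {}" using assms(7) by (cases n) auto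
  have fin: "finite {1..n}" by simp
  obtain k where k: "k \<in> {1..n}" and kmax:
    "Max ((\<lambda>k. integral\<^sup>L M (\<lambda>\<omega>. (X k \<omega>)\<^sup>2)) ` {1..n}) = I k"
  proof -
    have "Max ((\<lambda>k. integral\<^sup>L M (\<lambda>\<omega>. (X k \<omega>)\<^sup>2)) ` {1..n}) \<in> (\<lambda>k. integral\<^sup>L M (\<lambda>\<omega>. (X k \<omega>)\<^sup>2)) ` {1..n}"
      using n1 by (intro Max_in) auto
    then show ?thesis using that unfolding I_def by blast
  qed
  have Ik1: "I k \<le> 1"
  proof -
    have "I k \<le> (\<Sum>j=1..n. I j)" by (rule member_le_sum[OF k]) (use Inn in auto)
    then show ?thesis using assms(7) unfolding I_def by simp
  qed
  have key: "I k \<le> f x * c" if x: "x \<in> {0<..<min \<epsilon> 1}" for x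
  proof (cases "I k = 0")
    case True
    then show ?thesis using c0 unfolding f_def by simp
  next
    case False
    define s where "s = I k"
    define \<sigma> where "\<sigma> = sqrt s"
    have s0: "s > 0" using False Inn[of k] unfolding s_def by linarith
    have sig0: "\<sigma> > 0" and sig1: "\<sigma> \<le> 1" and sigs: "\<sigma>^2 = s"
      using s0 Ik1 unfolding \<sigma>_def s_def by auto
    define y where "y = x * \<sigma>"
    have x0: "0 < x" "x < 1" "x < \<epsilon>" using x by auto
    have y0: "0 < y" using x0 sig0 unfolding y_def by simp
    have yx: "y \<le> x" using x0 sig1 unfolding y_def by (simp add: mult_left_le)
    have ye: "y \<in> {0<..\<epsilon>}" using y0 yx x0 by auto
    have Tk: "s - y^2 \<le> T k y"
    proof -
      have "s \<le> integral\<^sup>L M (\<lambda>\<omega>. (X k \<omega>)\<^sup>2 * indicator {\<omega>. \<bar>X k \<omega>\<bar> \<ge> y} \<omega> + y^2)"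
        unfolding s_def I_def
      proof (rule integral_mono[OF assms(6)[OF k]])
        show "integrable M (\<lambda>\<omega>. (X k \<omega>)\<^sup>2 * indicator {\<omega>. \<bar>X k \<omega>\<bar> \<ge> y} \<omega> + y^2)"
          using intT[OF k] by simp
        fix \<omega> show "(X k \<omega>)\<^sup>2 \<le> (X k \<omega>)\<^sup>2 * indicator {\<omega>. \<bar>X k \<omega>\<bar> \<ge> y} \<omega> + y^2"
        proof (cases "y \<le> \<bar>X k \<omega>\<bar>")
          case True then show ?thesis by (simp add: indicator_def)
        next
          case False
          then have "\<bar>X k \<omega>\<bar>^2 \<le> y^2" by (intro power_mono) auto
          then show ?thesis by (simp add: indicator_def)
        qed
      qed
      also have "\<dots> = T k y + y^2"
        unfolding T_def using intT[OF k] by (simp add: P.prob_space)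
      finally show ?thesis by simp
    qed
    have LT: "T k y \<le> lind_L M X n y"
      unfolding Ldef by (rule member_le_sum[OF k]) (use Tnn in auto)
    have a0: "x - x^3 > 0"
    proof -
      have "x*x < 1*1" using x0 by (intro mult_strict_mono) auto
      then have "x*(x*x) < x*1" using x0 by (intro mult_strict_left_mono) auto
      then have "x^3 < x" by (simp add: power3_eq_cube)
      then show ?thesis by simp
    qed
    have "\<sigma>^3 * (x - x^3) = y * (s - y^2)"
      unfolding y_def using sigs by (simp add: algebra_simps power2_eq_square power3_eq_cube)
    also have "\<dots> \<le> y * lind_L M X n y"
      using Tk LT y0 by (intro mult_left_mono) auto
    finally have ineq: "\<sigma>^3 * (x - x^3) \<le> y * lind_L M X n y" .
    have "(\<sigma>^3 * (x - x^3)) powr (2/3) \<le> (y * lind_L M X n y) powr (2/3)"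
      using ineq sig0 a0 by (intro powr_mono2) auto
    also have "\<dots> \<le> c" by (rule cupper[OF ye])
    finally have h: "(\<sigma>^3 * (x - x^3)) powr (2/3) \<le> c" .
    have "(\<sigma>^3 * (x - x^3)) powr (2/3) = (\<sigma> powr 3) powr (2/3) * (x - x^3) powr (2/3)"
      using sig0 a0 by (simp add: powr_mult powr_realpow)
    also have "(\<sigma> powr 3) powr (2/3) = \<sigma> powr 2" by (simp add: powr_powr)
    also have "\<sigma> powr 2 = s" using sig0 sigs by (simp add: powr_realpow)
    finally have "s * (x - x^3) powr (2/3) \<le> c" using h by simp
    moreover have pp: "(x - x^3) powr (2/3) > 0" using a0 by simp
    ultimately have "s \<le> c / (x - x^3) powr (2/3)"
      by (subst pos_le_divide_eq[OF pp])
    moreover have "(x - x^3) powr (-(2/3)) * c = c / (x - x^3) powr (2/3)"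
      unfolding powr_minus_divide by simp
    ultimately show ?thesis unfolding f_def s_def by simp
  qed
  have ne: "{0<..<min \<epsilon> 1} \<noteq> {}" using assms(8)
    by (auto intro!: exI[of _ "min \<epsilon> 1 / 2"])
  have "I k \<le> alpha_eps \<epsilon> * c"
  proof (cases "c = 0")
    case True
    obtain x where "x \<in> {0<..<min \<epsilon> 1}" using ne by blast
    then show ?thesis using key[of x] True by simp
  next
    case False
    then have cp: "c > 0" using c0 by simp
    have "I k / c \<le> alpha_eps \<epsilon>"
      unfolding alpha_eps_def
    proof (rule cINF_greatest[OF ne])
      fix x assume "x \<in> {0<..<min \<epsilon> 1}"
      then show "I k / c \<le> (x - x ^ 3) powr (-(2/3))"
        using key[of x] cp unfolding f_def by (simp add: divide_le_eq)
    qed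
    then show ?thesis using cp by (simp add: divide_le_eq mult.commute)
  qed
  then show ?thesis using kmax unfolding c_def by simp
qed

end
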